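(* Let $S=\{x_i\mid i\in\mathbb{Z}\}\subset\mathbb{R}$ with $x_i<x_{i+1}$ for all $i\in\mathbb{Z}$, and assume $S$ has no accumulation point in $\mathbb{R}$. Let $\alpha\ge1$ and define $\varphi(x)=|x-x_i|^\alpha$ for $x\in\big[\frac{x_i+x_{i-1}}{2},\frac{x_i+x_{i+1}}{2}\big]$, $i\in\mathbb{Z}$, and $\mu:=\varphi\,dx$. Then the closure $(\mathcal{E},D(\mathcal{E}))$ on $L^2(\mathbb{R},\mu)$ of the form $$\mathcal{E}(f,g)=\frac12\int_{\mathbb{R}}f'(x)g'(x)\,\mu(dx),\qquad f,g\in C_0^\infty(\mathbb{R}),$$ is recurrent.
   Context: The form above is closable on $L^2(\mathbb{R},\mu)$ (since $1/\varphi\in L^1_{loc}(\mathbb{R}\setminus S,dx)$ and $S$ is Lebesgue-null). A closed symmetric form $(\mathcal{E},D(\mathcal{E}))$ on $L^2(\mathbb{R},\mu)$ is called recurrent if there exists a sequence $(u_n)_{n\in\mathbb{N}}\subset D(\mathcal{E})$ with $0\le u_n\le 1$, $u_n\nearrow 1$ $dx$-a.e. as $n\to\infty$, and $\lim_{n\to\infty}\mathcal{E}(u_n,u_n)=0$. *)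

theory Defs
  imports "HOL-Analysis.Analysis"
begin

text \<open>The weight: for x in [(x_{i-1}+x_i)/2, (x_i+x_{i+1})/2], phi x = |x - x_i| powr alpha.
  (At the common endpoints both choices of i give the same value.)\<close>
definition weight :: "(int \<Rightarrow> real) \<Rightarrow> real \<Rightarrow> real \<Rightarrow> real" where
  "weight xs \<alpha> t =
     \<bar>t - xs (SOME i. (xs (i - 1) + xs i) / 2 \<le> t \<and> t \<le> (xs i + xs (i + 1)) / 2)\<bar> powr \<alpha>"

definition wmeasure :: "(int \<Rightarrow> real) \<Rightarrow> real \<Rightarrow> real measure" where
  "wmeasure xs \<alpha> = density lborel (\<lambda>t. ennreal (weight xs \<alpha> t))"

definition test_fun :: "(real \<Rightarrow> real) \<Rightarrow> bool" where
  "test_fun f \<longleftrightarrow> (\<forall>k x. ((deriv ^^ k) f) differentiable (at x))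
                    \<and> compact (closure {x. f x \<noteq> 0})"

definition preform :: "real measure \<Rightarrow> (real \<Rightarrow> real) \<Rightarrow> (real \<Rightarrow> real) \<Rightarrow> real" where
  "preform M f g = (1/2) * (\<integral>x. deriv f x * deriv g x \<partial>M)"

text \<open>Closure of the (closable) form: f lies in D(E) with E(f,f) = e iff there is a sequence of
  test functions converging to f in L^2(M), which is E-Cauchy, and whose energies converge to e.
  (By closability, e is uniquely determined by f.)\<close>
definition closure_energy :: "real measure \<Rightarrow> (real \<Rightarrow> real) \<Rightarrow> real \<Rightarrow> bool" where
  "closure_energy M f e \<longleftrightarrow> f \<in> borel_measurable M \<and>
     (\<exists>fs :: nat \<Rightarrow> real \<Rightarrow> real.
        (\<forall>n. test_fun (fs n)) \<and>
        ((\<lambda>n. \<integral>\<^sup>+ x. ennreal ((fs n x - f x)\<^sup>2) \<partial>M) \<longlonglongrightarrow> 0) \<and>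
        (\<forall>\<epsilon>>0. \<exists>N. \<forall>n\<ge>N. \<forall>m\<ge>N.
            preform M (\<lambda>x. fs n x - fs m x) (\<lambda>x. fs n x - fs m x) < \<epsilon>) \<and>
        ((\<lambda>n. preform M (fs n) (fs n)) \<longlonglongrightarrow> e))"

definition recurrent_closure :: "real measure \<Rightarrow> bool" where
  "recurrent_closure M \<longleftrightarrow>
     (\<exists>(u :: nat \<Rightarrow> real \<Rightarrow> real) (e :: nat \<Rightarrow> real).
        (\<forall>n. closure_energy M (u n) (e n)) \<and>
        (\<forall>n. AE x in lborel. 0 \<le> u n x \<and> u n x \<le> 1) \<and>
        (AE x in lborel. incseq (\<lambda>n. u n x) \<and> (\<lambda>n. u n x) \<longlonglongrightarrow> 1) \<and>
        e \<longlonglongrightarrow> 0)"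

end

theory Submission
  imports Defs "HOL-Computational_Algebra.Polynomial"
begin

definition su :: "nat \<Rightarrow> (real \<Rightarrow> real) \<Rightarrow> bool" where
  "su n f \<longleftrightarrow> (\<forall>j\<le>n. \<forall>x. (deriv ^^ j) f differentiable (at x))"

lemma su_0: "su 0 f \<longleftrightarrow> (\<forall>x. f differentiable (at x))"
  by (simp add: su_def)

lemma su_Suc: "su (Suc n) f \<longleftrightarrow> (\<forall>x. f differentiable (at x)) \<and> su n (deriv f)"
proof -
  have "su (Suc n) f \<longleftrightarrow> (\<forall>j\<le>Suc n. \<forall>x. (deriv ^^ j) f differentiable (at x))" by (simp add: su_def)
  also have "\<dots> \<longleftrightarrow> (\<forall>x. f differentiable (at x)) \<and> (\<forall>j\<le>n. \<forall>x. (deriv ^^ Suc j) f differentiable (at x))"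
    by (metis (no_types, lifting) Suc_le_mono funpow_0 not0_implies_Suc zero_le)
  also have "\<dots> \<longleftrightarrow> (\<forall>x. f differentiable (at x)) \<and> su n (deriv f)"
    by (simp add: su_def funpow_Suc_right del: funpow.simps)
  finally show ?thesis .
qed

lemma diffI: "(f has_real_derivative D) (at x) \<Longrightarrow> f differentiable (at x)"
  by (auto simp: real_differentiable_def)

lemma affine_DERIV: "(f has_real_derivative D) (at (a*x+b)) \<Longrightarrow> ((\<lambda>x. f (a*x+b)) has_real_derivative a*D) (at x)"
proof -
  assume f: "(f has_real_derivative D) (at (a*x+b))"
  have "((\<lambda>x. a * x + b) has_real_derivative a) (at x)" by (auto intro!: derivative_eq_intros)
  from DERIV_chain2[OF f this] show ?thesis by (simp add: mult.commute)
qed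

lemma su_diff: "su n f \<Longrightarrow> f differentiable (at x)"
  by (cases n) (auto simp: su_0 su_Suc)

lemma su_mono: "su (Suc n) f \<Longrightarrow> su n f"
  by (simp add: su_def)

lemma su_DERIV: "su n f \<Longrightarrow> (f has_real_derivative deriv f x) (at x)"
  using su_diff DERIV_deriv_iff_real_differentiable by blast

lemma su_const: "su n (\<lambda>x. c)"
proof (induction n arbitrary: c)
  case 0 then show ?case by (simp add: su_0)
next
  case (Suc n)
  have "deriv (\<lambda>x. c) = (\<lambda>x. 0)" by (rule ext) simp
  then show ?case using Suc by (simp add: su_Suc)
qed

lemma su_id: "su n (\<lambda>x. x)"
proof (cases n)
  case 0 then show ?thesis by (simp add: su_0)
next
  case (Suc m)
  have "deriv (\<lambda>x. x) = (\<lambda>x. 1::real)" by (rule ext) simp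
  then show ?thesis using Suc by (simp add: su_Suc su_const)
qed

lemma su_add: "su n f \<Longrightarrow> su n g \<Longrightarrow> su n (\<lambda>x. f x + g x)"
proof (induction n arbitrary: f g)
  case 0 then show ?case by (auto simp: su_0)
next
  case (Suc n)
  have "deriv (\<lambda>x. f x + g x) = (\<lambda>x. deriv f x + deriv g x)"
    by (rule ext, rule DERIV_imp_deriv, intro derivative_intros su_DERIV[OF Suc.prems(1)] su_DERIV[OF Suc.prems(2)])
  then show ?case using Suc by (auto simp: su_Suc)
qed

lemma su_mult: "su n f \<Longrightarrow> su n g \<Longrightarrow> su n (\<lambda>x. f x * g x)"
proof (induction n arbitrary: f g)
  case 0 then show ?case by (auto simp: su_0)
next
  case (Suc n)
  have "deriv (\<lambda>x. f x * g x) = (\<lambda>x. deriv f x * g x + f x * deriv g x)"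
  proof (rule ext, rule DERIV_imp_deriv)
    fix x show "((\<lambda>x. f x * g x) has_real_derivative deriv f x * g x + f x * deriv g x) (at x)"
      using su_DERIV[OF Suc.prems(1), of x] su_DERIV[OF Suc.prems(2), of x] by (auto intro!: derivative_eq_intros)
  qed
  moreover have "su n (\<lambda>x. deriv f x * g x + f x * deriv g x)"
  proof -
    have f1: "su n (deriv f)" "su n (deriv g)" using Suc.prems by (auto simp: su_Suc)
    have f2: "su n f" "su n g" using su_mono Suc.prems by auto
    show ?thesis by (rule su_add[OF Suc.IH[OF f1(1) f2(2)] Suc.IH[OF f2(1) f1(2)]])
  qed
  ultimately show ?case using Suc by (auto simp: su_Suc)
qed

lemma su_minus: "su n f \<Longrightarrow> su n (\<lambda>x. - f x)"
  using su_mult[OF su_const[of n "-1"], of f] by simp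

lemma su_diff': "su n f \<Longrightarrow> su n g \<Longrightarrow> su n (\<lambda>x. f x - g x)"
  using su_add[OF _ su_minus, of n f g] by simp

lemma su_affine: "su n f \<Longrightarrow> su n (\<lambda>x. f (a * x + b))"
proof (induction n arbitrary: f)
  case 0
  show ?case by (auto simp: su_0 intro!: diffI affine_DERIV su_DERIV[OF 0])
next
  case (Suc n)
  have "deriv (\<lambda>x. f (a * x + b)) = (\<lambda>x. a * deriv f (a * x + b))"
  proof (rule ext, rule DERIV_imp_deriv)
    fix x
    show "((\<lambda>x. f (a * x + b)) has_real_derivative a * deriv f (a * x + b)) (at x)"
      by (rule affine_DERIV[OF su_DERIV[OF Suc.prems]])
  qed
  moreover have "su n (\<lambda>x. a * deriv f (a * x + b))"
    using Suc.prems by (intro su_mult su_const Suc.IH) (simp add: su_Suc)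
  moreover have "\<forall>x. (\<lambda>x. f (a * x + b)) differentiable (at x)"
    using Suc.prems by (auto intro!: diffI affine_DERIV su_DERIV)
  ultimately show ?case by (simp add: su_Suc)
qed

lemma su_inverse: "su n g \<Longrightarrow> (\<And>x. g x \<noteq> 0) \<Longrightarrow> su n (\<lambda>x. 1 / g x)"
proof (induction n arbitrary: g)
  case 0
  then show ?case by (auto simp: su_0 intro!: diffI derivative_intros su_DERIV)
next
  case (Suc n)
  have "deriv (\<lambda>x. 1 / g x) = (\<lambda>x. - deriv g x * ((1 / g x) * (1 / g x)))"
  proof (rule ext, rule DERIV_imp_deriv)
    fix x show "((\<lambda>x. 1 / g x) has_real_derivative - deriv g x * ((1 / g x) * (1 / g x))) (at x)"
      using su_DERIV[OF Suc.prems(1), of x] Suc.prems(2)[of x] by (auto intro!: derivative_eq_intros simp: power2_eq_square)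
  qed
  moreover have "su n (\<lambda>x. - deriv g x * ((1 / g x) * (1 / g x)))"
  proof -
    have f1: "su n (deriv g)" using Suc.prems by (auto simp: su_Suc)
    have f2: "su n g" using su_mono Suc.prems by auto
    have f3: "su n (\<lambda>x. 1 / g x)" by (rule Suc.IH[OF f2 Suc.prems(2)])
    show ?thesis by (rule su_mult[OF su_minus[OF f1] su_mult[OF f3 f3]])
  qed
  moreover have "\<forall>x. (\<lambda>x. 1 / g x) differentiable (at x)"
    using Suc.prems by (auto intro!: diffI derivative_intros su_DERIV)
  ultimately show ?case by (simp add: su_Suc)
qed

lemma su_sum: "finite I \<Longrightarrow> (\<And>i. i \<in> I \<Longrightarrow> su n (f i)) \<Longrightarrow> su n (\<lambda>x. \<Sum>i\<in>I. f i x)"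
  by (induction I rule: finite_induct) (auto intro: su_add su_const)



definition hh :: "real \<Rightarrow> real" where "hh t = (if t > 0 then exp (- (1/t)) else 0)"
definition gP :: "real poly \<Rightarrow> real \<Rightarrow> real" where
  "gP P t = (if t > 0 then poly P (1/t) * exp (- (1/t)) else 0)"
definition QP :: "real poly \<Rightarrow> real poly" where "QP P = [:0,0,1:] * (P - pderiv P)"

lemma poly_exp_lim: fixes P :: "real poly" shows "((\<lambda>z. poly P z * z * exp (- z)) \<longlongrightarrow> 0) at_top"
proof -
  have eq: "poly P z * z * exp (- z) = (\<Sum>i\<le>degree P. coeff P i * (z ^ Suc i / exp z))" for z
    by (simp add: poly_altdef sum_distrib_right exp_minus divide_inverse sum_distrib_left algebra_simps)
  show ?thesis unfolding eq
    by (intro tendsto_null_sum tendsto_mult_right_zero tendsto_power_div_exp_0)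
qed

lemma gP_lim0: "((\<lambda>y. gP P y / y) \<longlongrightarrow> 0) (at_right 0)"
proof -
  have "((\<lambda>y. poly P (inverse y) * inverse y * exp (- inverse y)) \<longlongrightarrow> 0) (at_right 0)"
    using filterlim_compose[OF poly_exp_lim filterlim_inverse_at_top_right] by (simp add: o_def)
  moreover have "eventually (\<lambda>y. poly P (inverse y) * inverse y * exp (- inverse y) = gP P y / y) (at_right (0::real))"
    unfolding eventually_at_right_field by (rule exI[of _ 1]) (auto simp: gP_def field_simps)
  ultimately show ?thesis by (rule Lim_transform_eventually)
qed

lemma gP_DERIV: "(gP P has_real_derivative gP (QP P) t) (at t)"
proof -
  consider "t > 0" | "t < 0" | "t = 0" by linarith
  then show ?thesis
  proof cases
    case 1
    have d: "((\<lambda>t. poly P (1/t) * exp (- (1/t))) has_real_derivative gP (QP P) t) (at t)"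
    proof -
      have "((\<lambda>t. poly P (1/t) * exp (- (1/t))) has_real_derivative
         poly (pderiv P) (1/t) * (- (1/t^2)) * exp (- (1/t)) + poly P (1/t) * (exp (- (1/t)) * (1/t^2))) (at t)"
        using 1 by (auto intro!: derivative_eq_intros DERIV_chain2[OF poly_DERIV] simp: power2_eq_square field_simps)
      moreover have "poly (pderiv P) (1/t) * (- (1/t^2)) * exp (- (1/t)) + poly P (1/t) * (exp (- (1/t)) * (1/t^2)) = gP (QP P) t"
        using 1 by (simp add: gP_def QP_def algebra_simps power2_eq_square)
      ultimately show ?thesis by simp
    qed
    show ?thesis
      by (rule has_field_derivative_transform_within_open[OF d, of "{0<..}"]) (use 1 in \<open>auto simp: gP_def\<close>)
  next
    case 2
    have "gP (QP P) t = 0" using 2 by (simp add: gP_def)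
    then show ?thesis
      using has_field_derivative_transform_within_open[OF DERIV_const[of 0 "at t"], of "{..<0}" "gP P"] 2
      by (auto simp: gP_def)
  next
    case 3
    have "((\<lambda>y. (gP P y - gP P 0) / (y - 0)) \<longlongrightarrow> 0) (at 0)"
      unfolding filterlim_at_split
    proof
      show "((\<lambda>y. (gP P y - gP P 0) / (y - 0)) \<longlongrightarrow> 0) (at_left 0)"
        by (rule Lim_transform_eventually[OF tendsto_const]) (auto simp: eventually_at_left_field gP_def intro!: exI[of _ "-1"])
      show "((\<lambda>y. (gP P y - gP P 0) / (y - 0)) \<longlongrightarrow> 0) (at_right 0)"
        using gP_lim0[of P] by (simp add: gP_def)
    qed
    then show ?thesis using 3 by (simp add: has_field_derivative_iff gP_def)
  qed
qed

lemma deriv_gP: "deriv (gP P) = gP (QP P)"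
  by (rule ext, rule DERIV_imp_deriv, rule gP_DERIV)

lemma hh_iter: "\<exists>P. (deriv ^^ k) hh = gP P"
proof (induction k)
  case 0
  have "hh = gP [:1:]" by (rule ext) (simp add: hh_def gP_def)
  then show ?case by auto
next
  case (Suc k)
  then obtain P where "(deriv ^^ k) hh = gP P" by auto
  then show ?case by (auto simp: deriv_gP)
qed

lemma su_hh: "su n hh"
  unfolding su_def using hh_iter by (metis diffI gP_DERIV)

lemma hh_pos: "t > 0 \<Longrightarrow> hh t > 0" and hh_zero: "t \<le> 0 \<Longrightarrow> hh t = 0" and hh_nonneg: "hh t \<ge> 0"
  by (auto simp: hh_def)


definition sig :: "real \<Rightarrow> real" where "sig t = hh t * (1 / (hh t + hh (1 - t)))"

lemma hh_den_pos: "hh t + hh (1 - t) > 0"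
  by (cases "t > 0") (auto simp: hh_def add_pos_nonneg add_nonneg_pos)

lemma su_sig: "su n sig"
proof -
  have a: "su n (\<lambda>x. hh (1 - x))" using su_affine[OF su_hh, of n "-1" 1] by simp
  have b: "su n (\<lambda>x. 1 / (hh x + hh (1 - x)))"
    by (rule su_inverse[OF su_add[OF su_hh a]]) (use hh_den_pos in \<open>auto simp: less_le\<close>)
  show ?thesis unfolding sig_def[abs_def] by (rule su_mult[OF su_hh b])
qed

lemma sig_0: "t \<le> 0 \<Longrightarrow> sig t = 0" by (simp add: sig_def hh_def)
lemma sig_1: "t \<ge> 1 \<Longrightarrow> sig t = 1"
  using hh_den_pos[of t] by (simp add: sig_def hh_def)
lemma sig_nonneg: "sig t \<ge> 0" using hh_den_pos[of t] hh_nonneg[of t] by (simp add: sig_def)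
lemma sig_le1: "sig t \<le> 1" using hh_den_pos[of t] hh_nonneg[of t] hh_nonneg[of "1-t"] by (simp add: sig_def)

lemma sig_DERIV: "(sig has_real_derivative deriv sig t) (at t)"
  by (rule su_DERIV[OF su_sig[of 0]])

lemma dsig_out: "t \<le> 0 \<or> t \<ge> 1 \<Longrightarrow> deriv sig t = 0"
proof -
  assume "t \<le> 0 \<or> t \<ge> 1"
  then show ?thesis
  proof
    assume "t \<le> 0"
    then show ?thesis by (intro DERIV_local_min[OF sig_DERIV, of 1]) (auto simp: sig_0 sig_nonneg)
  next
    assume "t \<ge> 1"
    then show ?thesis by (intro DERIV_local_max[OF sig_DERIV, of 1]) (auto simp: sig_1 sig_le1)
  qed
qed

lemma dsig_bound: "\<exists>B>0. \<forall>t. \<bar>deriv sig t\<bar> \<le> B"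
proof -
  have "\<forall>x. deriv sig differentiable (at x)" using su_sig[of 1] by (simp add: su_Suc su_0)
  then have "continuous_on {0..1} (deriv sig)"
    by (intro continuous_at_imp_continuous_on) (auto intro: differentiable_imp_continuous_within)
  then have "bounded (deriv sig ` {0..1})" by (intro compact_imp_bounded compact_continuous_image) auto
  then obtain a where a: "\<forall>y\<in>deriv sig ` {0..1}. norm y \<le> a" by (auto simp: bounded_iff)
  show ?thesis
  proof (intro exI[of _ "\<bar>a\<bar> + 1"] conjI allI)
    fix t
    show "\<bar>deriv sig t\<bar> \<le> \<bar>a\<bar> + 1"
    proof (cases "t \<le> 0 \<or> t \<ge> 1")
      case True then show ?thesis by (simp add: dsig_out)
    next
      case False then have "t \<in> {0..1}" by auto
      then show ?thesis using a by force
    qed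
  qed auto
qed

definition stp :: "real \<Rightarrow> real \<Rightarrow> real \<Rightarrow> real" where "stp c d x = 1 - sig ((x - c) / d)"

lemma stp_1: "d > 0 \<Longrightarrow> x \<le> c \<Longrightarrow> stp c d x = 1" by (simp add: stp_def sig_0 divide_nonpos_pos)
lemma stp_0: "d > 0 \<Longrightarrow> x \<ge> c + d \<Longrightarrow> stp c d x = 0" by (simp add: stp_def sig_1 le_divide_eq)
lemma stp_nonneg: "stp c d x \<ge> 0" by (simp add: stp_def sig_le1)
lemma stp_le1: "stp c d x \<le> 1" by (simp add: stp_def sig_nonneg)

lemma su_stp: "su n (stp c d)"
proof -
  have "su n (\<lambda>x. 1 - sig ((1/d) * x + (- c / d)))" by (intro su_diff' su_const su_affine su_sig)
  moreover have "(\<lambda>x. 1 - sig ((1/d) * x + (- c / d))) = stp c d"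
    by (rule ext) (simp add: stp_def diff_divide_distrib)
  ultimately show ?thesis by simp
qed

lemma stp_DERIV: "(stp c d has_real_derivative - (deriv sig ((x - c) / d) / d)) (at x)"
proof -
  have "((\<lambda>x. sig ((1/d) * x + (- c / d))) has_real_derivative (1/d) * deriv sig ((1/d) * x + (- c / d))) (at x)"
    by (rule affine_DERIV[OF sig_DERIV])
  then have "((\<lambda>x. 1 - sig ((1/d) * x + (- c / d))) has_real_derivative - ((1/d) * deriv sig ((1/d) * x + (- c / d)))) (at x)"
    by (auto intro!: derivative_eq_intros)
  moreover have "(\<lambda>x. 1 - sig ((1/d) * x + (- c / d))) = stp c d"
    by (rule ext) (simp add: stp_def diff_divide_distrib)
  moreover have "(1/d) * x + (- c / d) = (x - c) / d" by (simp add: diff_divide_distrib)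
  ultimately show ?thesis by simp
qed

definition dd :: "(nat \<Rightarrow> real) \<Rightarrow> nat \<Rightarrow> real" where "dd z j = min 1 (z (Suc j) - z j)"

definition Ravg :: "(nat \<Rightarrow> real) \<Rightarrow> nat \<Rightarrow> real \<Rightarrow> real" where
  "Ravg z n x = (\<Sum>j\<in>{n+1..2*n+1}. stp (z j) (dd z j) x) / (real n + 1)"

lemma su_Ravg: "su k (Ravg z n)"
proof -
  have "su k (\<lambda>x. (\<Sum>j\<in>{n+1..2*n+1}. stp (z j) (dd z j) x) * (1 / (real n + 1)))"
    by (intro su_mult su_sum su_stp su_const) auto
  then show ?thesis by (simp add: Ravg_def[abs_def])
qed

lemma Ravg_nonneg: "Ravg z n x \<ge> 0"
  by (simp add: Ravg_def sum_nonneg stp_nonneg)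

lemma Ravg_le1: "Ravg z n x \<le> 1"
proof -
  have "(\<Sum>j\<in>{n+1..2*n+1}. stp (z j) (dd z j) x) \<le> of_nat (card {n+1..2*n+1}) * 1"
    by (rule sum_bounded_above) (simp add: stp_le1)
  then show ?thesis by (simp add: Ravg_def)
qed

lemma Ravg_DERIV: "(Ravg z n has_real_derivative
   (\<Sum>j\<in>{n+1..2*n+1}. - (deriv sig ((x - z j) / dd z j) / dd z j)) / (real n + 1)) (at x)"
  unfolding Ravg_def[abs_def]
  by (intro DERIV_cdivide DERIV_sum) (rule stp_DERIV)

context
  fixes z :: "nat \<Rightarrow> real"
  assumes zinc: "\<And>j. z j < z (Suc j)"
begin

lemma z_le: "i \<le> j \<Longrightarrow> z i \<le> z j"
  by (rule lift_Suc_mono_le[of z]) (use zinc less_imp_le in auto)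

lemma dd_pos: "dd z j > 0" using zinc[of j] by (simp add: dd_def)
lemma dd_le: "z j + dd z j \<le> z (Suc j)" by (simp add: dd_def)
lemma dd_le1: "dd z j \<le> 1" by (simp add: dd_def)

lemma stp_step: "stp (z j) (dd z j) x \<le> stp (z (Suc j)) (dd z (Suc j)) x"
proof (cases "x \<le> z (Suc j)")
  case True then show ?thesis using dd_pos stp_1 stp_le1 by metis
next
  case False then have "x \<ge> z j + dd z j" using dd_le[of j] by linarith
  then show ?thesis using dd_pos stp_0 stp_nonneg by metis
qed

lemma stp_mono: "i \<le> j \<Longrightarrow> stp (z i) (dd z i) x \<le> stp (z j) (dd z j) x"
  by (rule lift_Suc_mono_le[of "\<lambda>j. stp (z j) (dd z j) x"]) (use stp_step in auto)

lemma Ravg_mono: "Ravg z n x \<le> Ravg z (Suc n) x"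
proof -
  define F where "F j = stp (z j) (dd z j) x" for j
  define S where "S = (\<Sum>j\<in>{n+1..2*n+1}. F j)"
  define T where "T = (\<Sum>j\<in>{n+2..2*n+2}. F j)"
  have ST: "S \<le> T"
  proof -
    have "S \<le> (\<Sum>j\<in>{n+1..2*n+1}. F (Suc j))"
      unfolding S_def by (rule sum_mono) (simp add: F_def stp_step)
    also have "\<dots> = T" unfolding T_def
      using sum.shift_bounds_cl_Suc_ivl[of F "n+1" "2*n+1"] by simp
    finally show ?thesis .
  qed
  have TF: "T \<le> (real n + 1) * F (2*n+3)"
  proof -
    have "T \<le> of_nat (card {n+2..2*n+2}) * F (2*n+3)"
      unfolding T_def by (rule sum_bounded_above) (auto simp: F_def intro!: stp_mono)
    then show ?thesis by (simp add: add.commute)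
  qed
  have S': "(\<Sum>j\<in>{Suc n+1..2*Suc n+1}. F j) = T + F (2*n+3)"
  proof -
    have "{Suc n+1..2*Suc n+1} = insert (2*n+3) {n+2..2*n+2}" by auto
    then show ?thesis unfolding T_def by simp
  qed
  have "S * (real n + 2) \<le> (T + F (2*n+3)) * (real n + 1)"
  proof -
    have "S * (real n + 2) \<le> T * (real n + 2)" using ST by (intro mult_right_mono) auto
    also have "\<dots> = T * (real n + 1) + T" by (simp add: algebra_simps)
    also have "\<dots> \<le> T * (real n + 1) + (real n + 1) * F (2*n+3)" using TF by linarith
    also have "\<dots> = (T + F (2*n+3)) * (real n + 1)" by (simp add: algebra_simps)
    finally show ?thesis .
  qed
  then show ?thesis
    unfolding Ravg_def F_def[symmetric] S_def[symmetric] S' by (simp add: divide_simps add.commute)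
qed

lemma Ravg_one: "x \<le> z (n+1) \<Longrightarrow> Ravg z n x = 1"
proof -
  assume x: "x \<le> z (n+1)"
  have "(\<Sum>j\<in>{n+1..2*n+1}. stp (z j) (dd z j) x) = (\<Sum>j\<in>{n+1..2*n+1}. 1)"
  proof (rule sum.cong[OF refl])
    fix j assume "j \<in> {n+1..2*n+1}"
    then have "z (n+1) \<le> z j" by (intro z_le) auto
    then show "stp (z j) (dd z j) x = 1" using x dd_pos by (intro stp_1) auto
  qed
  then show ?thesis by (simp add: Ravg_def)
qed

lemma Ravg_zero: "x \<ge> z (2*n+2) \<Longrightarrow> Ravg z n x = 0"
proof -
  assume x: "x \<ge> z (2*n+2)"
  have "(\<Sum>j\<in>{n+1..2*n+1}. stp (z j) (dd z j) x) = 0"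
  proof (rule sum.neutral, rule ballI)
    fix j assume "j \<in> {n+1..2*n+1}"
    then have "z (Suc j) \<le> z (2*n+2)" by (intro z_le) auto
    then show "stp (z j) (dd z j) x = 0" using x dd_pos dd_le[of j] by (intro stp_0) auto
  qed
  then show ?thesis by (simp add: Ravg_def)
qed


lemma a_supp: "deriv sig ((x - z j) / dd z j) \<noteq> 0 \<Longrightarrow> z j < x \<and> x < z j + dd z j"
proof -
  assume ne: "deriv sig ((x - z j) / dd z j) \<noteq> 0"
  have d: "dd z j > 0" by (rule dd_pos)
  show ?thesis
  proof (rule ccontr)
    assume "\<not> (z j < x \<and> x < z j + dd z j)"
    then have "(x - z j) / dd z j \<le> 0 \<or> (x - z j) / dd z j \<ge> 1"
      using d by (auto simp: divide_nonpos_pos le_divide_eq)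
    then show False using ne dsig_out by blast
  qed
qed

lemma Ravg_energy_pt:
  assumes B: "\<And>t. \<bar>deriv sig t\<bar> \<le> B" and w0: "0 \<le> w"
    and wb: "\<And>j. \<bar>x - z j\<bar> \<le> 1 \<Longrightarrow> w \<le> \<bar>x - z j\<bar>"
  shows "w * ((\<Sum>j\<in>{n+1..2*n+1}. - (deriv sig ((x - z j) / dd z j) / dd z j)) / (real n + 1))\<^sup>2
     \<le> (\<Sum>j\<in>{n+1..2*n+1}. (B\<^sup>2 / dd z j) * indicator {z j..z j + dd z j} x) / (real n + 1)\<^sup>2"
proof -
  define a where "a j = - (deriv sig ((x - z j) / dd z j) / dd z j)" for j
  define J where "J = {n+1..2*n+1}"
  have dis: "a j * a k = 0" if "j \<noteq> k" for j k
  proof (rule ccontr)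
    assume "a j * a k \<noteq> 0"
    then have "deriv sig ((x - z j) / dd z j) \<noteq> 0" "deriv sig ((x - z k) / dd z k) \<noteq> 0"
      by (auto simp: a_def)
    then have j: "z j < x \<and> x < z j + dd z j" and k: "z k < x \<and> x < z k + dd z k" by (auto dest: a_supp)
    show False
    proof (cases "j < k")
      case True
      then have "z (Suc j) \<le> z k" by (intro z_le) auto
      then show False using j k dd_le[of j] by linarith
    next
      case False then have "k < j" using that by auto
      then have "z (Suc k) \<le> z j" by (intro z_le) auto
      then show False using j k dd_le[of k] by linarith
    qed
  qed
  have sq: "(\<Sum>j\<in>J. a j)\<^sup>2 = (\<Sum>j\<in>J. (a j)\<^sup>2)"
  proof -
    have "(\<Sum>j\<in>J. a j)\<^sup>2 = (\<Sum>j\<in>J. \<Sum>k\<in>J. a j * a k)"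
      by (simp add: power2_eq_square sum_product)
    also have "\<dots> = (\<Sum>j\<in>J. (a j)\<^sup>2)"
    proof (rule sum.cong[OF refl])
      fix j assume jJ: "j \<in> J"
      have "(\<Sum>k\<in>J. a j * a k) = a j * a j + (\<Sum>k\<in>J - {j}. a j * a k)"
        by (rule sum.remove) (use jJ in \<open>auto simp: J_def\<close>)
      also have "(\<Sum>k\<in>J - {j}. a j * a k) = 0" by (rule sum.neutral) (auto simp: dis)
      finally show "(\<Sum>k\<in>J. a j * a k) = (a j)\<^sup>2" by (simp add: power2_eq_square)
    qed
    finally show ?thesis .
  qed
  have tm: "w * (a j)\<^sup>2 \<le> (B\<^sup>2 / dd z j) * indicator {z j..z j + dd z j} x" for j
  proof (cases "deriv sig ((x - z j) / dd z j) = 0")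
    case True then show ?thesis by (simp add: a_def indicator_def dd_pos less_imp_le)
  next
    case False
    then have x: "z j < x \<and> x < z j + dd z j" by (rule a_supp)
    have d: "dd z j > 0" by (rule dd_pos)
    have "\<bar>x - z j\<bar> \<le> 1" using x dd_le1[of j] by auto
    then have wd: "w \<le> dd z j" using wb[of j] x by auto
    have "(a j)\<^sup>2 = (deriv sig ((x - z j) / dd z j))\<^sup>2 / (dd z j)\<^sup>2" by (simp add: a_def power_divide)
    also have "\<dots> \<le> B\<^sup>2 / (dd z j)\<^sup>2"
      using B[of "(x - z j) / dd z j"] d by (intro divide_right_mono) (auto simp: abs_le_square_iff[symmetric])
    finally have aB: "(a j)\<^sup>2 \<le> B\<^sup>2 / (dd z j)\<^sup>2" .
    have "w * (a j)\<^sup>2 \<le> dd z j * (B\<^sup>2 / (dd z j)\<^sup>2)" using wd aB w0 by (intro mult_mono) auto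
    also have "\<dots> = B\<^sup>2 / dd z j" using d by (simp add: power2_eq_square)
    finally show ?thesis using x by (simp add: indicator_def)
  qed
  have "w * ((\<Sum>j\<in>J. a j) / (real n + 1))\<^sup>2 = (\<Sum>j\<in>J. w * (a j)\<^sup>2) / (real n + 1)\<^sup>2"
    by (simp add: power_divide sq sum_distrib_left)
  also have "\<dots> \<le> (\<Sum>j\<in>J. (B\<^sup>2 / dd z j) * indicator {z j..z j + dd z j} x) / (real n + 1)\<^sup>2"
    by (intro divide_right_mono sum_mono tm) auto
  finally show ?thesis by (simp add: a_def J_def)
qed

end





lemma nn_int_ind_sum:
  assumes "finite J" "\<And>j. j \<in> J \<Longrightarrow> 0 \<le> c j" "\<And>j. j \<in> J \<Longrightarrow> a j \<le> b j"
  shows "(\<integral>\<^sup>+x. ennreal (\<Sum>j\<in>J. c j * indicator {a j..b j} x) \<partial>lborel) = ennreal (\<Sum>j\<in>J. c j * (b j - a j))"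
proof -
  have "(\<integral>\<^sup>+x. ennreal (\<Sum>j\<in>J. c j * indicator {a j..b j} x) \<partial>lborel)
      = (\<integral>\<^sup>+x. (\<Sum>j\<in>J. ennreal (c j) * indicator {a j..b j} x) \<partial>lborel)"
  proof (rule nn_integral_cong)
    fix x :: real
    have "ennreal (\<Sum>j\<in>J. c j * indicator {a j..b j} x) = (\<Sum>j\<in>J. ennreal (c j * indicator {a j..b j} x))"
      by (rule sum_ennreal[symmetric]) (use assms(2) in \<open>auto simp: indicator_def\<close>)
    also have "\<dots> = (\<Sum>j\<in>J. ennreal (c j) * indicator {a j..b j} x)"
      by (rule sum.cong) (auto simp: indicator_def)
    finally show "ennreal (\<Sum>j\<in>J. c j * indicator {a j..b j} x) = (\<Sum>j\<in>J. ennreal (c j) * indicator {a j..b j} x)" .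
  qed
  also have "\<dots> = (\<Sum>j\<in>J. \<integral>\<^sup>+x. ennreal (c j) * indicator {a j..b j} x \<partial>lborel)"
    by (rule nn_integral_sum) auto
  also have "\<dots> = (\<Sum>j\<in>J. ennreal (c j * (b j - a j)))"
  proof (rule sum.cong[OF refl])
    fix j assume j: "j \<in> J"
    have "(\<integral>\<^sup>+x. ennreal (c j) * indicator {a j..b j} x \<partial>lborel) = ennreal (c j) * emeasure lborel {a j..b j}"
      using nn_integral_cmult_indicator[of "{a j..b j}" lborel "ennreal (c j)"] by simp
    also have "\<dots> = ennreal (c j * (b j - a j))"
      using assms(2,3)[OF j] by (simp add: ennreal_mult)
    finally show "(\<integral>\<^sup>+x. ennreal (c j) * indicator {a j..b j} x \<partial>lborel) = ennreal (c j * (b j - a j))" .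
  qed
  also have "\<dots> = ennreal (\<Sum>j\<in>J. c j * (b j - a j))"
    by (rule sum_ennreal) (use assms(2,3) in auto)
  finally show ?thesis .
qed

lemma sq_bound_aux:
  fixes A C p q :: real
  assumes "\<bar>p\<bar> \<le> 1" "\<bar>q\<bar> \<le> 1"
  shows "(A * q + p * C)\<^sup>2 \<le> 2 * A\<^sup>2 + 2 * C\<^sup>2"
proof -
  have "(A * q + p * C)\<^sup>2 \<le> 2 * (A * q)\<^sup>2 + 2 * (p * C)\<^sup>2"
    using sum_squares_ge_zero[of "A*q - p*C" 0] by (simp add: power2_eq_square algebra_simps)
  moreover have "(A * q)\<^sup>2 \<le> A\<^sup>2" using assms(2)
    by (simp add: power_mult_distrib) (metis abs_le_square_iff abs_one mult_left_le one_power2 zero_le_power2 power2_eq_square)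
  moreover have "(p * C)\<^sup>2 \<le> C\<^sup>2" using assms(1)
    by (simp add: power_mult_distrib) (metis abs_le_square_iff abs_one mult_left_le one_power2 zero_le_power2 power2_eq_square mult.commute)
  ultimately show ?thesis by linarith
qed

definition zR :: "(int \<Rightarrow> real) \<Rightarrow> nat \<Rightarrow> real" where "zR xs j = xs (int j)"
definition zL :: "(int \<Rightarrow> real) \<Rightarrow> nat \<Rightarrow> real" where "zL xs j = - xs (- int j)"
definition uu :: "(int \<Rightarrow> real) \<Rightarrow> nat \<Rightarrow> real \<Rightarrow> real" where
  "uu xs n x = Ravg (zR xs) n x * Ravg (zL xs) n (- x)"
definition DR :: "(nat \<Rightarrow> real) \<Rightarrow> nat \<Rightarrow> real \<Rightarrow> real" where
  "DR z n x = (\<Sum>j\<in>{n+1..2*n+1}. - (deriv sig ((x - z j) / dd z j) / dd z j)) / (real n + 1)"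
definition SS :: "real \<Rightarrow> (nat \<Rightarrow> real) \<Rightarrow> nat \<Rightarrow> real \<Rightarrow> real" where
  "SS B z n x = (\<Sum>j\<in>{n+1..2*n+1}. (B\<^sup>2 / dd z j) * indicator {z j..z j + dd z j} x)"
definition SL :: "real \<Rightarrow> (nat \<Rightarrow> real) \<Rightarrow> nat \<Rightarrow> real \<Rightarrow> real" where
  "SL B z n x = (\<Sum>j\<in>{n+1..2*n+1}. (B\<^sup>2 / dd z j) * indicator {- (z j + dd z j)..- z j} x)"

lemma su_uu: "su k (uu xs n)"
proof -
  have "su k (\<lambda>x. Ravg (zL xs) n ((-1) * x + 0))" by (intro su_affine su_Ravg)
  then have "su k (\<lambda>x. Ravg (zL xs) n (- x))" by simp
  then show ?thesis unfolding uu_def[abs_def] by (intro su_mult su_Ravg)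
qed

lemma uu_DERIV: "(uu xs n has_real_derivative
    DR (zR xs) n x * Ravg (zL xs) n (- x) + Ravg (zR xs) n x * (- DR (zL xs) n (- x))) (at x)"
proof -
  have l: "((\<lambda>x. Ravg (zL xs) n ((-1) * x + 0)) has_real_derivative (-1) * DR (zL xs) n ((-1) * x + 0)) (at x)"
    by (rule affine_DERIV) (unfold DR_def, rule Ravg_DERIV)
  have r: "(Ravg (zR xs) n has_real_derivative DR (zR xs) n x) (at x)"
    unfolding DR_def by (rule Ravg_DERIV)
  show ?thesis unfolding uu_def[abs_def] using DERIV_mult[OF r l] by (simp add: mult.commute)
qed

lemma deriv_uu: "deriv (uu xs n) x = DR (zR xs) n x * Ravg (zL xs) n (- x) + Ravg (zR xs) n x * (- DR (zL xs) n (- x))"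
  by (rule DERIV_imp_deriv[OF uu_DERIV])


context
  fixes xs :: "int \<Rightarrow> real" and \<alpha> :: real
  assumes xinc: "\<And>i. xs i < xs (i + 1)"
    and nolim: "\<And>c. \<not> c islimpt range xs"
    and alpha: "\<alpha> \<ge> 1"
begin

lemma xs_less_aux: "xs i < xs (i + int k + 1)"
proof (induction k)
  case 0 then show ?case using xinc[of i] by simp
next
  case (Suc k)
  have e: "i + int (Suc k) + 1 = (i + int k + 1) + 1" by simp
  show ?case unfolding e using Suc xinc[of "i + int k + 1"] by linarith
qed

lemma xs_less: "i < j \<Longrightarrow> xs i < xs j"
  using xs_less_aux[of i "nat (j - i - 1)"] by simp

lemma xs_le: "i \<le> j \<Longrightarrow> xs i \<le> xs j"
  using xs_less[of i j] by (cases "i = j") auto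

lemma unb_above: "\<exists>i. xs i > b"
proof (rule ccontr)
  assume "\<not> (\<exists>i. xs i > b)"
  then have bd: "\<forall>i. xs (int i) \<le> b" by (simp add: not_less)
  have inc: "incseq (\<lambda>n. xs (int n))" by (rule incseq_SucI) (simp add: xs_le)
  obtain L where L: "(\<lambda>n. xs (int n)) \<longlonglongrightarrow> L" "\<forall>i. xs (int i) \<le> L"
    by (rule incseq_convergent[OF inc bd])
  have "L islimpt range xs"
    unfolding islimpt_sequential
  proof (intro exI conjI allI)
    fix n
    have "xs (int n) < xs (int (Suc n))" by (simp add: xs_less)
    then have "xs (int n) \<noteq> L" using L(2)[rule_format, of "Suc n"] by auto
    then show "xs (int n) \<in> range xs - {L}" by auto
  qed (rule L(1))
  then show False using nolim by blast
qed

lemma unb_below: "\<exists>i. xs i < b"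
proof (rule ccontr)
  assume "\<not> (\<exists>i. xs i < b)"
  then have bd: "\<forall>i. b \<le> xs (- int i)" by (simp add: not_less)
  have dec: "decseq (\<lambda>n. xs (- int n))" by (rule decseq_SucI) (simp add: xs_le)
  obtain L where L: "(\<lambda>n. xs (- int n)) \<longlonglongrightarrow> L" "\<forall>i. L \<le> xs (- int i)"
    by (rule decseq_convergent[OF dec bd])
  have "L islimpt range xs"
    unfolding islimpt_sequential
  proof (intro exI conjI allI)
    fix n
    have "xs (- int (Suc n)) < xs (- int n)" by (simp add: xs_less)
    then have "xs (- int n) \<noteq> L" using L(2)[rule_format, of "Suc n"] by auto
    then show "xs (- int n) \<in> range xs - {L}" by auto
  qed (rule L(1))
  then show False using nolim by blast
qed

lemma witness: "\<exists>i. (xs (i - 1) + xs i) / 2 \<le> t \<and> t \<le> (xs i + xs (i + 1)) / 2"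
proof -
  obtain i0 where i0: "xs i0 \<le> t" using unb_below[of t] less_imp_le by blast
  obtain j where j: "xs j > t" using unb_above by auto
  have ij: "i0 < j" using i0 j xs_le by (meson le_less_trans linorder_not_le)
  define k where "k = (LEAST k::nat. xs (i0 + int k + 1) > t)"
  have ex: "xs (i0 + int (nat (j - i0 - 1)) + 1) > t" using ij j by simp
  have k1: "xs (i0 + int k + 1) > t" unfolding k_def by (rule LeastI[of _ "nat (j - i0 - 1)"]) (rule ex)
  have k2: "xs (i0 + int k) \<le> t"
  proof (cases k)
    case 0 then show ?thesis using i0 by simp
  next
    case (Suc k')
    then have "\<not> xs (i0 + int k' + 1) > t" unfolding k_def using not_less_Least[of k' "\<lambda>k. xs (i0 + int k + 1) > t"]
      using Suc k_def by auto
    moreover have "i0 + int k = i0 + int k' + 1" using Suc by simp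
    ultimately show ?thesis by (simp only: not_less)
  qed
  define m where "m = i0 + int k"
  have m1: "xs m \<le> t" "t < xs (m + 1)" using k1 k2 by (auto simp: m_def)
  show ?thesis
  proof (cases "t \<le> (xs m + xs (m + 1)) / 2")
    case True
    have "xs (m - 1) < xs m" by (simp add: xs_less)
    then show ?thesis using True m1 by (intro exI[of _ m]) auto
  next
    case False
    have "xs (m + 1) < xs (m + 1 + 1)" by (simp add: xs_less)
    then show ?thesis using False m1 by (intro exI[of _ "m + 1"]) auto
  qed
qed

lemma nearest:
  assumes "(xs (i - 1) + xs i) / 2 \<le> t" "t \<le> (xs i + xs (i + 1)) / 2"
  shows "\<bar>t - xs i\<bar> \<le> \<bar>t - xs j\<bar>"
proof (cases "j > i")
  case True
  then have "xs (i + 1) \<le> xs j" "xs i < xs j" by (auto intro: xs_le xs_less)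
  note h = this
  have "t - xs i \<le> xs j - t" using h assms by argo
  moreover have "-(t - xs i) \<le> xs j - t" using h assms by argo
  ultimately have "\<bar>t - xs i\<bar> \<le> xs j - t" by (simp add: abs_le_iff)
  then show ?thesis using abs_ge_minus_self[of "t - xs j"] by linarith
next
  case False
  show ?thesis
  proof (cases "j = i")
    case True then show ?thesis by simp
  next
    case False
    then have "j \<le> i - 1" "j < i" using \<open>\<not> j > i\<close> by auto
    then have "xs j \<le> xs (i - 1)" "xs j < xs i" by (auto intro: xs_le xs_less)
    note h = this
    have "t - xs i \<le> t - xs j" using h assms by argo
    moreover have "-(t - xs i) \<le> t - xs j" using h assms by argo
    ultimately have "\<bar>t - xs i\<bar> \<le> t - xs j" by (simp add: abs_le_iff)
    then show ?thesis using abs_ge_self[of "t - xs j"] by linarith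
  qed
qed

lemma weight_eq: "weight xs \<alpha> t = infdist t (range xs) powr \<alpha>"
proof -
  define i where "i = (SOME i. (xs (i - 1) + xs i) / 2 \<le> t \<and> t \<le> (xs i + xs (i + 1)) / 2)"
  have i: "(xs (i - 1) + xs i) / 2 \<le> t \<and> t \<le> (xs i + xs (i + 1)) / 2"
    unfolding i_def by (rule someI_ex[OF witness])
  have "infdist t (range xs) = \<bar>t - xs i\<bar>"
  proof (rule antisym)
    show "infdist t (range xs) \<le> \<bar>t - xs i\<bar>" using infdist_le[of "xs i" "range xs" t] by (simp add: dist_real_def)
    show "\<bar>t - xs i\<bar> \<le> infdist t (range xs)"
      unfolding infdist_def using i nearest by (auto intro!: cINF_greatest simp: dist_real_def)
  qed
  then show ?thesis unfolding weight_def i_def by simp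
qed

lemma weight_meas: "(\<lambda>t. weight xs \<alpha> t) \<in> borel_measurable borel"
proof -
  have "(\<lambda>t. infdist t (range xs)) \<in> borel_measurable borel"
    by (intro borel_measurable_continuous_onI continuous_intros)
  then show ?thesis unfolding weight_eq by measurable
qed

lemma weight_nonneg: "weight xs \<alpha> t \<ge> 0" by (simp add: weight_def)

lemma weight_bound: "\<bar>t - xs j\<bar> \<le> 1 \<Longrightarrow> weight xs \<alpha> t \<le> \<bar>t - xs j\<bar>"
proof -
  assume a: "\<bar>t - xs j\<bar> \<le> 1"
  have "weight xs \<alpha> t \<le> \<bar>t - xs j\<bar> powr \<alpha>"
    unfolding weight_eq using infdist_le[of "xs j" "range xs" t]
    by (intro powr_mono2) (use alpha in \<open>auto simp: dist_real_def infdist_nonneg\<close>)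
  also have "\<dots> \<le> \<bar>t - xs j\<bar> powr 1" by (rule powr_mono') (use a alpha in auto)
  finally show ?thesis by simp
qed


lemma zR_inc: "zR xs j < zR xs (Suc j)"
proof -
  have e: "int (Suc j) = int j + 1" by simp
  show ?thesis unfolding zR_def e by (rule xinc)
qed

lemma zL_inc: "zL xs j < zL xs (Suc j)"
proof -
  have e: "- int (Suc j) = - int j - 1" by simp
  have "xs (- int j - 1) < xs (- int j)" using xinc[of "- int j - 1"] by simp
  then show ?thesis unfolding zL_def e by simp
qed

lemma energy_pt:
  assumes B: "\<And>t. \<bar>deriv sig t\<bar> \<le> B"
  shows "weight xs \<alpha> x * (deriv (uu xs n) x)\<^sup>2
     \<le> 2 * (SS B (zR xs) n x + SL B (zL xs) n x) / (real n + 1)\<^sup>2"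
proof -
  define W where "W = weight xs \<alpha> x"
  have W0: "0 \<le> W" by (simp add: W_def weight_nonneg)
  have hR: "W * (DR (zR xs) n x)\<^sup>2 \<le> SS B (zR xs) n x / (real n + 1)\<^sup>2"
    unfolding DR_def SS_def
    by (rule Ravg_energy_pt[of "zR xs", OF zR_inc B W0]) (unfold W_def zR_def, rule weight_bound)
  have hL0: "W * (DR (zL xs) n (- x))\<^sup>2 \<le> SS B (zL xs) n (- x) / (real n + 1)\<^sup>2"
    unfolding DR_def SS_def
  proof (rule Ravg_energy_pt[of "zL xs", OF zL_inc B W0])
    fix j assume "\<bar>- x - zL xs j\<bar> \<le> 1"
    then have "\<bar>x - xs (- int j)\<bar> \<le> 1" by (simp add: zL_def abs_minus_commute)
    then have "W \<le> \<bar>x - xs (- int j)\<bar>" unfolding W_def by (rule weight_bound)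
    then show "W \<le> \<bar>- x - zL xs j\<bar>" by (simp add: zL_def abs_minus_commute)
  qed
  have "SS B (zL xs) n (- x) = SL B (zL xs) n x"
    unfolding SS_def SL_def by (rule sum.cong) (auto simp: indicator_def)
  with hL0 have hL: "W * (DR (zL xs) n (- x))\<^sup>2 \<le> SL B (zL xs) n x / (real n + 1)\<^sup>2" by simp
  have sq: "(deriv (uu xs n) x)\<^sup>2 \<le> 2 * (DR (zR xs) n x)\<^sup>2 + 2 * (DR (zL xs) n (- x))\<^sup>2"
    unfolding deriv_uu
    using sq_bound_aux[of "Ravg (zR xs) n x" "Ravg (zL xs) n (- x)" "DR (zR xs) n x" "- DR (zL xs) n (- x)"]
    by (simp add: Ravg_nonneg Ravg_le1)
  have "W * (deriv (uu xs n) x)\<^sup>2 \<le> W * (2 * (DR (zR xs) n x)\<^sup>2 + 2 * (DR (zL xs) n (- x))\<^sup>2)"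
    using sq W0 by (rule mult_left_mono)
  also have "\<dots> = 2 * (W * (DR (zR xs) n x)\<^sup>2) + 2 * (W * (DR (zL xs) n (- x))\<^sup>2)" by (simp add: algebra_simps)
  also have "\<dots> \<le> 2 * (SS B (zR xs) n x / (real n + 1)\<^sup>2) + 2 * (SL B (zL xs) n x / (real n + 1)\<^sup>2)"
    using hR hL by linarith
  also have "\<dots> = 2 * (SS B (zR xs) n x + SL B (zL xs) n x) / (real n + 1)\<^sup>2" by (simp add: add_divide_distrib)
  finally show ?thesis unfolding W_def .
qed

lemma int_SS: "(\<integral>\<^sup>+x. ennreal (SS B z n x) \<partial>lborel) = ennreal ((real n + 1) * B\<^sup>2)" if zi: "\<And>j. z j < z (Suc j)" for z
proof -
  have "(\<integral>\<^sup>+x. ennreal (SS B z n x) \<partial>lborel) = ennreal (\<Sum>j\<in>{n+1..2*n+1}. (B\<^sup>2 / dd z j) * (z j + dd z j - z j))"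
    unfolding SS_def by (rule nn_int_ind_sum) (use dd_pos[of z, OF zi] less_imp_le[OF dd_pos[of z, OF zi]] in \<open>auto simp: zero_le_divide_iff\<close>)
  also have "(\<Sum>j\<in>{n+1..2*n+1}. (B\<^sup>2 / dd z j) * (z j + dd z j - z j)) = (\<Sum>j\<in>{n+1..2*n+1}. B\<^sup>2)"
    by (rule sum.cong) (use dd_pos[of z, OF zi] in \<open>auto simp: less_imp_neq[symmetric]\<close>)
  finally show ?thesis by simp
qed

lemma int_SL: "(\<integral>\<^sup>+x. ennreal (SL B z n x) \<partial>lborel) = ennreal ((real n + 1) * B\<^sup>2)" if zi: "\<And>j. z j < z (Suc j)" for z
proof -
  have "(\<integral>\<^sup>+x. ennreal (SL B z n x) \<partial>lborel) = ennreal (\<Sum>j\<in>{n+1..2*n+1}. (B\<^sup>2 / dd z j) * (- z j - - (z j + dd z j)))"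
    unfolding SL_def by (rule nn_int_ind_sum) (use dd_pos[of z, OF zi] less_imp_le[OF dd_pos[of z, OF zi]] in \<open>auto simp: zero_le_divide_iff\<close>)
  also have "(\<Sum>j\<in>{n+1..2*n+1}. (B\<^sup>2 / dd z j) * (- z j - - (z j + dd z j))) = (\<Sum>j\<in>{n+1..2*n+1}. B\<^sup>2)"
    by (rule sum.cong) (use dd_pos[of z, OF zi] in \<open>auto simp: less_imp_neq[symmetric]\<close>)
  finally show ?thesis by simp
qed

lemma SS_nonneg: "SS B z n x \<ge> 0" if zi: "\<And>j. z j < z (Suc j)" for z
  unfolding SS_def using dd_pos[of z, OF zi] by (intro sum_nonneg) (auto intro!: mult_nonneg_nonneg simp: less_imp_le)
lemma SL_nonneg: "SL B z n x \<ge> 0" if zi: "\<And>j. z j < z (Suc j)" for z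
  unfolding SL_def using dd_pos[of z, OF zi] by (intro sum_nonneg) (auto intro!: mult_nonneg_nonneg simp: less_imp_le)

lemma energy_int:
  assumes B: "\<And>t. \<bar>deriv sig t\<bar> \<le> B"
  shows "(\<integral>\<^sup>+x. ennreal (weight xs \<alpha> x * (deriv (uu xs n) x)\<^sup>2) \<partial>lborel) \<le> ennreal (4 * B\<^sup>2 / (real n + 1))"
proof -
  define K where "K = 2 / (real n + 1)\<^sup>2"
  have K0: "K \<ge> 0" by (simp add: K_def)
  have "(\<integral>\<^sup>+x. ennreal (weight xs \<alpha> x * (deriv (uu xs n) x)\<^sup>2) \<partial>lborel)
     \<le> (\<integral>\<^sup>+x. ennreal K * ennreal (SS B (zR xs) n x) + ennreal K * ennreal (SL B (zL xs) n x) \<partial>lborel)"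
  proof (rule nn_integral_mono)
    fix x
    have "weight xs \<alpha> x * (deriv (uu xs n) x)\<^sup>2 \<le> K * SS B (zR xs) n x + K * SL B (zL xs) n x"
    proof -
      have "2 * (SS B (zR xs) n x + SL B (zL xs) n x) / (real n + 1)\<^sup>2 = K * SS B (zR xs) n x + K * SL B (zL xs) n x"
        by (simp add: K_def add_divide_distrib algebra_simps)
      then show ?thesis using energy_pt[OF B, of x n] by linarith
    qed
    then have "ennreal (weight xs \<alpha> x * (deriv (uu xs n) x)\<^sup>2) \<le> ennreal (K * SS B (zR xs) n x + K * SL B (zL xs) n x)"
      by (rule ennreal_leI)
    also have "\<dots> = ennreal K * ennreal (SS B (zR xs) n x) + ennreal K * ennreal (SL B (zL xs) n x)"
      using K0 SS_nonneg[of "zR xs", OF zR_inc] SL_nonneg[of "zL xs", OF zL_inc]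
      by (simp add: ennreal_plus ennreal_mult)
    finally show "ennreal (weight xs \<alpha> x * (deriv (uu xs n) x)\<^sup>2) \<le> \<dots>" .
  qed
  also have "\<dots> = ennreal K * (\<integral>\<^sup>+x. ennreal (SS B (zR xs) n x) \<partial>lborel) + ennreal K * (\<integral>\<^sup>+x. ennreal (SL B (zL xs) n x) \<partial>lborel)"
    by (subst nn_integral_add) (auto simp: SS_def SL_def nn_integral_cmult)
  also have "\<dots> = ennreal K * ennreal ((real n + 1) * B\<^sup>2) + ennreal K * ennreal ((real n + 1) * B\<^sup>2)"
    by (simp only: int_SS[of "zR xs", OF zR_inc] int_SL[of "zL xs", OF zL_inc])
  also have "\<dots> = ennreal (K * ((real n + 1) * B\<^sup>2) + K * ((real n + 1) * B\<^sup>2))"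
  proof -
    have c0: "(real n + 1) * B\<^sup>2 \<ge> 0" by simp
    show ?thesis using K0 c0 by (metis ennreal_mult ennreal_plus mult_nonneg_nonneg)
  qed
  also have "K * ((real n + 1) * B\<^sup>2) + K * ((real n + 1) * B\<^sup>2) = 4 * B\<^sup>2 / (real n + 1)"
  proof -
    define m where "m = real n + 1"
    have m: "m \<noteq> 0" by (simp add: m_def)
    have "2 / m\<^sup>2 * (m * B\<^sup>2) + 2 / m\<^sup>2 * (m * B\<^sup>2) = 4 * B\<^sup>2 / m"
      using m by (simp add: power2_eq_square field_simps)
    then show ?thesis by (simp add: K_def m_def)
  qed
  finally show ?thesis .
qed



lemma uu_nonneg: "uu xs n x \<ge> 0" by (simp add: uu_def Ravg_nonneg)
lemma uu_le1: "uu xs n x \<le> 1" by (simp add: uu_def Ravg_nonneg Ravg_le1 mult_le_one)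

lemma uu_mono: "uu xs n x \<le> uu xs (Suc n) x"
  unfolding uu_def
  by (intro mult_mono Ravg_mono[of "zR xs", OF zR_inc] Ravg_mono[of "zL xs", OF zL_inc] Ravg_nonneg)

lemma uu_lim: "(\<lambda>n. uu xs n x) \<longlonglongrightarrow> 1"
proof -
  obtain i where i: "xs i > x" using unb_above by auto
  obtain i' where i': "xs i' < x" using unb_below by auto
  have "eventually (\<lambda>n. uu xs n x = 1) sequentially"
    unfolding eventually_sequentially
  proof (intro exI[of _ "nat i + nat (- i')"] allI impI)
    fix n assume n: "nat i + nat (- i') \<le> n"
    have "xs i \<le> xs (int (n + 1))" using n by (intro xs_le) linarith
    then have r: "Ravg (zR xs) n x = 1" using i by (intro Ravg_one[of "zR xs", OF zR_inc]) (simp add: zR_def)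
    have "xs (- int (n + 1)) \<le> xs i'" using n by (intro xs_le) linarith
    then have l: "Ravg (zL xs) n (- x) = 1" using i' by (intro Ravg_one[of "zL xs", OF zL_inc]) (simp add: zL_def)
    show "uu xs n x = 1" by (simp add: uu_def r l)
  qed
  then show ?thesis by (rule tendsto_eventually)
qed

lemma uu_test: "test_fun (uu xs n)"
  unfolding test_fun_def
proof
  show "\<forall>k x. (deriv ^^ k) (uu xs n) differentiable at x"
  proof (intro allI)
    fix k x show "(deriv ^^ k) (uu xs n) differentiable at x" using su_uu[of k xs n] by (auto simp: su_def)
  qed
  have "{x. uu xs n x \<noteq> 0} \<subseteq> {xs (- int (2*n+2))..xs (int (2*n+2))}"
  proof
    fix x assume x: "x \<in> {x. uu xs n x \<noteq> 0}"
    show "x \<in> {xs (- int (2*n+2))..xs (int (2*n+2))}"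
    proof (rule ccontr)
      assume "x \<notin> {xs (- int (2*n+2))..xs (int (2*n+2))}"
      then consider "x > xs (int (2*n+2))" | "x < xs (- int (2*n+2))" by force
      then have "uu xs n x = 0"
      proof cases
        case 1
        then have "Ravg (zR xs) n x = 0" by (intro Ravg_zero[of "zR xs", OF zR_inc]) (simp add: zR_def)
        then show ?thesis by (simp add: uu_def)
      next
        case 2
        then have "Ravg (zL xs) n (- x) = 0" by (intro Ravg_zero[of "zL xs", OF zL_inc]) (simp add: zL_def)
        then show ?thesis by (simp add: uu_def)
      qed
      then show False using x by simp
    qed
  qed
  then have "bounded {x. uu xs n x \<noteq> 0}" by (rule bounded_subset[rotated]) simp
  then show "compact (closure {x. uu xs n x \<noteq> 0})" by (simp add: compact_closure)
qed

lemma meas_w: "f \<in> borel_measurable borel \<Longrightarrow> f \<in> borel_measurable (wmeasure xs \<alpha>)"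
  unfolding wmeasure_def by (subst measurable_cong_sets[OF sets_density refl]) simp

lemma su_cont: "su 0 f \<Longrightarrow> continuous_on UNIV f"
  by (intro continuous_at_imp_continuous_on) (auto intro: differentiable_imp_continuous_within simp: su_0)

lemma deriv_uu_meas: "deriv (uu xs n) \<in> borel_measurable borel"
proof -
  have "su 0 (deriv (uu xs n))" using su_uu[of 1 xs n] by (simp add: su_Suc)
  then show ?thesis by (intro borel_measurable_continuous_onI su_cont)
qed

lemma deriv0: "deriv (\<lambda>x::real. 0::real) = (\<lambda>x. 0)"
  by (rule ext, rule DERIV_imp_deriv) simp

lemma energy_e:
  assumes B: "\<And>t. \<bar>deriv sig t\<bar> \<le> B"
  shows "preform (wmeasure xs \<alpha>) (uu xs n) (uu xs n) \<le> 2 * B\<^sup>2 / (real n + 1)"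
    and "preform (wmeasure xs \<alpha>) (uu xs n) (uu xs n) \<ge> 0"
proof -
  note dm[measurable] = deriv_uu_meas[of n]
  note wm[measurable] = weight_meas
  have m1: "(\<lambda>x. deriv (uu xs n) x * deriv (uu xs n) x) \<in> borel_measurable (wmeasure xs \<alpha>)"
    by (intro meas_w) measurable
  have I: "integral\<^sup>L (wmeasure xs \<alpha>) (\<lambda>x. deriv (uu xs n) x * deriv (uu xs n) x)
      = enn2real (\<integral>\<^sup>+x. ennreal (deriv (uu xs n) x * deriv (uu xs n) x) \<partial>wmeasure xs \<alpha>)"
    by (rule integral_eq_nn_integral[OF m1]) auto
  have N: "(\<integral>\<^sup>+x. ennreal (deriv (uu xs n) x * deriv (uu xs n) x) \<partial>wmeasure xs \<alpha>)
      = (\<integral>\<^sup>+x. ennreal (weight xs \<alpha> x * (deriv (uu xs n) x)\<^sup>2) \<partial>lborel)"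
    unfolding wmeasure_def
    by (subst nn_integral_density) (auto intro!: nn_integral_cong simp: ennreal_mult[symmetric] weight_nonneg power2_eq_square)
  have "enn2real (\<integral>\<^sup>+x. ennreal (weight xs \<alpha> x * (deriv (uu xs n) x)\<^sup>2) \<partial>lborel) \<le> enn2real (ennreal (4 * B\<^sup>2 / (real n + 1)))"
    by (rule enn2real_mono[OF energy_int[OF B]]) simp
  also have "\<dots> = 4 * B\<^sup>2 / (real n + 1)" by simp
  finally have le: "enn2real (\<integral>\<^sup>+x. ennreal (weight xs \<alpha> x * (deriv (uu xs n) x)\<^sup>2) \<partial>lborel) \<le> 4 * B\<^sup>2 / (real n + 1)" .
  show "preform (wmeasure xs \<alpha>) (uu xs n) (uu xs n) \<le> 2 * B\<^sup>2 / (real n + 1)"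
    unfolding preform_def I N using le by simp
  show "preform (wmeasure xs \<alpha>) (uu xs n) (uu xs n) \<ge> 0"
    unfolding preform_def I N by simp
qed

lemma main: "recurrent_closure (wmeasure xs \<alpha>)"
proof -
  obtain B where B: "\<And>t. \<bar>deriv sig t\<bar> \<le> B" using dsig_bound by auto
  define e where "e n = preform (wmeasure xs \<alpha>) (uu xs n) (uu xs n)" for n
  have ce: "closure_energy (wmeasure xs \<alpha>) (uu xs n) (e n)" for n
    unfolding closure_energy_def
  proof (intro conjI exI[of _ "\<lambda>_. uu xs n"] allI impI)
    have "su 0 (uu xs n)" by (rule su_uu)
    then show "uu xs n \<in> borel_measurable (wmeasure xs \<alpha>)"
      by (intro meas_w borel_measurable_continuous_onI su_cont)
    show "\<And>m. test_fun (uu xs n)" by (rule uu_test)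
    show "(\<lambda>m. \<integral>\<^sup>+ x. ennreal ((uu xs n x - uu xs n x)\<^sup>2) \<partial>wmeasure xs \<alpha>) \<longlonglongrightarrow> 0" by simp
    show "\<exists>N. \<forall>na\<ge>N. \<forall>m\<ge>N. preform (wmeasure xs \<alpha>) (\<lambda>x. uu xs n x - uu xs n x) (\<lambda>x. uu xs n x - uu xs n x) < \<epsilon>"
      if "\<epsilon> > 0" for \<epsilon> using that by (simp add: preform_def deriv0)
    show "(\<lambda>m. preform (wmeasure xs \<alpha>) (uu xs n) (uu xs n)) \<longlonglongrightarrow> e n" by (simp add: e_def)
  qed
  have e0: "e \<longlonglongrightarrow> 0"
  proof (rule real_tendsto_sandwich[of "\<lambda>n. 0" e _ "\<lambda>n. 2 * B\<^sup>2 * inverse (real (Suc n))"])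
    show "eventually (\<lambda>n. 0 \<le> e n) sequentially" using energy_e(2)[OF B] by (simp add: e_def)
    show "eventually (\<lambda>n. e n \<le> 2 * B\<^sup>2 * inverse (real (Suc n))) sequentially"
      using energy_e(1)[OF B] by (simp add: e_def divide_inverse add.commute)
    show "(\<lambda>n. 0) \<longlonglongrightarrow> (0::real)" by simp
    show "(\<lambda>n. 2 * B\<^sup>2 * inverse (real (Suc n))) \<longlonglongrightarrow> 0"
      by (rule tendsto_mult_right_zero[OF LIMSEQ_inverse_real_of_nat])
  qed
  show ?thesis
    unfolding recurrent_closure_def
  proof (intro exI[of _ "uu xs"] exI[of _ e] conjI allI)
    show "\<And>n. closure_energy (wmeasure xs \<alpha>) (uu xs n) (e n)" by (rule ce)
    show "\<And>n. AE x in lborel. 0 \<le> uu xs n x \<and> uu xs n x \<le> 1" by (simp add: uu_nonneg uu_le1)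
    show "AE x in lborel. incseq (\<lambda>n. uu xs n x) \<and> (\<lambda>n. uu xs n x) \<longlonglongrightarrow> 1"
      by (intro AE_I2 conjI incseq_SucI uu_mono uu_lim)
    show "e \<longlonglongrightarrow> 0" by (rule e0)
  qed
qed

end

theorem mainTheorem2:
  fixes xs :: "int \<Rightarrow> real" and \<alpha> :: real
  assumes "\<And>i. xs i < xs (i + 1)"
    and "\<And>c. \<not> c islimpt range xs"
    and "\<alpha> \<ge> 1"
  shows "recurrent_closure (wmeasure xs \<alpha>)"
  by (rule main[OF assms])

end
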